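(* Let $G$ be a connected graph of order $n$. Then $\overline{\mathrm{lcs}}(G)=n-1$ if and only if $G$ has a vertex $v$ for which $\chi(G\setminus v)=\chi(G)-1=\deg(v)$.
   Context: All graphs are finite and simple. For a graph $G=(V,E)$ and an integer $k\ge\chi(G)$, a proper $k$-colouring is a map $c:V\to[k]$ with $c(u)\neq c(v)$ for every edge $uv$. A set $S\subseteq V$ is a determining set for $(G,c)$ if there is no proper $k$-colouring $c'\neq c$ of $G$ with $c'(s)=c(s)$ for all $s\in S$. A critical set for $(G,c)$ is an inclusion-minimal determining set. $\mathrm{lcs}(G,c)$ denotes the size of a largest critical set for $(G,c)$, and $\overline{\mathrm{lcs}}(G,k)$ is the maximum of $\mathrm{lcs}(G,c)$ over all proper $k$-colourings $c$ of $G$; $\overline{\mathrm{lcs}}(G)=\overline{\mathrm{lcs}}(G,\chi(G))$. $G\setminus v$ denotes $G$ with vertex $v$ deleted. *)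

theory Defs
  imports Main
begin

definition simple_graph :: "'a set \<Rightarrow> ('a \<Rightarrow> 'a \<Rightarrow> bool) \<Rightarrow> bool" where
  "simple_graph V E \<longleftrightarrow> finite V \<and> (\<forall>u v. E u v \<longrightarrow> u \<in> V \<and> v \<in> V)
     \<and> (\<forall>u v. E u v \<longrightarrow> E v u) \<and> (\<forall>v. \<not> E v v)"

definition connected_graph :: "'a set \<Rightarrow> ('a \<Rightarrow> 'a \<Rightarrow> bool) \<Rightarrow> bool" where
  "connected_graph V E \<longleftrightarrow> V \<noteq> {} \<and> (\<forall>u\<in>V. \<forall>v\<in>V. E\<^sup>*\<^sup>* u v)"

definition degree :: "'a set \<Rightarrow> ('a \<Rightarrow> 'a \<Rightarrow> bool) \<Rightarrow> 'a \<Rightarrow> nat" where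
  "degree V E v = card {u \<in> V. E v u}"

definition del_vertex_V :: "'a set \<Rightarrow> 'a \<Rightarrow> 'a set" where
  "del_vertex_V V v = V - {v}"

definition del_vertex_E :: "('a \<Rightarrow> 'a \<Rightarrow> bool) \<Rightarrow> 'a \<Rightarrow> 'a \<Rightarrow> 'a \<Rightarrow> bool" where
  "del_vertex_E E v = (\<lambda>x y. E x y \<and> x \<noteq> v \<and> y \<noteq> v)"

definition proper_colouring :: "'a set \<Rightarrow> ('a \<Rightarrow> 'a \<Rightarrow> bool) \<Rightarrow> nat \<Rightarrow> ('a \<Rightarrow> nat) \<Rightarrow> bool" where
  "proper_colouring V E k c \<longleftrightarrow> (\<forall>v\<in>V. c v < k) \<and> (\<forall>u\<in>V. \<forall>v\<in>V. E u v \<longrightarrow> c u \<noteq> c v)"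

definition chromatic_number :: "'a set \<Rightarrow> ('a \<Rightarrow> 'a \<Rightarrow> bool) \<Rightarrow> nat" where
  "chromatic_number V E = (LEAST k. \<exists>c. proper_colouring V E k c)"

definition determining_set ::
  "'a set \<Rightarrow> ('a \<Rightarrow> 'a \<Rightarrow> bool) \<Rightarrow> nat \<Rightarrow> ('a \<Rightarrow> nat) \<Rightarrow> 'a set \<Rightarrow> bool" where
  "determining_set V E k c S \<longleftrightarrow> S \<subseteq> V \<and>
     \<not> (\<exists>c'. proper_colouring V E k c' \<and> (\<exists>v\<in>V. c' v \<noteq> c v) \<and> (\<forall>s\<in>S. c' s = c s))"

definition critical_set ::
  "'a set \<Rightarrow> ('a \<Rightarrow> 'a \<Rightarrow> bool) \<Rightarrow> nat \<Rightarrow> ('a \<Rightarrow> nat) \<Rightarrow> 'a set \<Rightarrow> bool" where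
  "critical_set V E k c S \<longleftrightarrow> determining_set V E k c S \<and>
     (\<forall>T. T \<subset> S \<longrightarrow> \<not> determining_set V E k c T)"

definition lcs :: "'a set \<Rightarrow> ('a \<Rightarrow> 'a \<Rightarrow> bool) \<Rightarrow> nat \<Rightarrow> ('a \<Rightarrow> nat) \<Rightarrow> nat" where
  "lcs V E k c = Max {card S | S. critical_set V E k c S}"

definition lcs_bar_k :: "'a set \<Rightarrow> ('a \<Rightarrow> 'a \<Rightarrow> bool) \<Rightarrow> nat \<Rightarrow> nat" where
  "lcs_bar_k V E k = Max {lcs V E k c | c. proper_colouring V E k c}"

definition lcs_bar :: "'a set \<Rightarrow> ('a \<Rightarrow> 'a \<Rightarrow> bool) \<Rightarrow> nat" where
  "lcs_bar V E = lcs_bar_k V E (chromatic_number V E)"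

end

theory Submission
  imports Defs
begin

lemma proper_restrict:
  "proper_colouring V E k c \<Longrightarrow> proper_colouring (del_vertex_V V v) (del_vertex_E E v) k c"
  unfolding proper_colouring_def del_vertex_V_def del_vertex_E_def by auto

lemma proper_cong:
  "proper_colouring V E k c \<Longrightarrow> (\<And>y. y \<in> V \<Longrightarrow> f y = c y) \<Longrightarrow> proper_colouring V E k f"
  unfolding proper_colouring_def by auto

lemma chi_le: "proper_colouring V E k c \<Longrightarrow> chromatic_number V E \<le> k"
  unfolding chromatic_number_def by (rule Least_le) blast

lemma chi_ex:
  assumes "finite V" "\<And>x. \<not> E x x"
  shows "\<exists>c. proper_colouring V E (chromatic_number V E) c"
proof -
  obtain h where "bij_betw h V {0..<card V}" using ex_bij_betw_finite_nat[OF assms(1)] by blast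
  then have "proper_colouring V E (card V) h"
    using assms(2) unfolding proper_colouring_def bij_betw_def inj_on_def by fastforce
  then show ?thesis
    using LeastI_ex[of "\<lambda>k. \<exists>c. proper_colouring V E k c"] unfolding chromatic_number_def by blast
qed

definition recol where
  "recol V E k c x \<longleftrightarrow> (\<exists>d. d \<noteq> c x \<and> proper_colouring V E k (c(x:=d)))"

lemma class_elim:
  assumes P: "proper_colouring V E k c" and b: "b < k"
    and R: "\<And>x. x \<in> V \<Longrightarrow> c x = b \<Longrightarrow> recol V E k c x"
  shows "\<exists>c3. proper_colouring V E (k - 1) c3"
proof -
  define D where "D y = (SOME d. d \<noteq> c y \<and> proper_colouring V E k (c(y:=d)))" for y
  have D: "D y \<noteq> b \<and> proper_colouring V E k (c(y:= D y))" if "y \<in> V" "c y = b" for y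
  proof -
    have "\<exists>d. d \<noteq> c y \<and> proper_colouring V E k (c(y:=d))" using R[OF that] unfolding recol_def .
    from someI_ex[OF this] show ?thesis unfolding D_def using that by simp
  qed
  have Dk: "D y < k" if "y \<in> V" "c y = b" for y
    using D[OF that] that(1) unfolding proper_colouring_def by (metis fun_upd_same)
  have D2: "D y \<noteq> c x" if "y \<in> V" "c y = b" "x \<in> V" "E y x \<or> E x y" for x y
  proof -
    have "x \<noteq> y" using P that unfolding proper_colouring_def by metis
    then show ?thesis using D[OF that(1,2)] that(3,4) that(1) unfolding proper_colouring_def
      by (metis fun_upd_same fun_upd_other)
  qed
  define c2 where "c2 y = (if c y = b then D y else c y)" for y
  have c2: "proper_colouring V E k c2"
    unfolding proper_colouring_def
  proof (intro conjI ballI impI)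
    fix v assume "v \<in> V" then show "c2 v < k" using Dk P unfolding c2_def proper_colouring_def by auto
  next
    fix u v assume uv: "u \<in> V" "v \<in> V" "E u v"
    then have "c u \<noteq> c v" using P unfolding proper_colouring_def by auto
    then show "c2 u \<noteq> c2 v" unfolding c2_def using D2[of u v] D2[of v u] uv by auto
  qed
  have c2b: "c2 y \<noteq> b" if "y \<in> V" for y
    using D that unfolding c2_def by auto
  define c3 where "c3 y = (if c2 y > b then c2 y - 1 else c2 y)" for y
  have "proper_colouring V E (k - 1) c3"
    unfolding proper_colouring_def
  proof (intro conjI ballI impI)
    fix v assume v: "v \<in> V"
    then have "c2 v < k" "c2 v \<noteq> b" using c2 c2b unfolding proper_colouring_def by auto
    then show "c3 v < k - 1" unfolding c3_def using b by auto
  next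
    fix u v assume uv: "u \<in> V" "v \<in> V" "E u v"
    then have "c2 u \<noteq> c2 v" "c2 u \<noteq> b" "c2 v \<noteq> b" using c2 c2b unfolding proper_colouring_def by auto
    then show "c3 u \<noteq> c3 v" unfolding c3_def by auto
  qed
  then show ?thesis by blast
qed

lemma det_mono:
  "determining_set V E k c S \<Longrightarrow> S \<subseteq> T \<Longrightarrow> T \<subseteq> V \<Longrightarrow> determining_set V E k c T"
  unfolding determining_set_def by blast

lemma crit_ex:
  assumes "finite V" shows "\<exists>S. critical_set V E k c S"
proof -
  have "determining_set V E k c V" unfolding determining_set_def by auto
  then obtain S where S: "determining_set V E k c S" "\<forall>T. determining_set V E k c T \<longrightarrow> card S \<le> card T"
    using ex_has_least_nat[of "determining_set V E k c" V card] by blast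
  have fS: "finite S" using S(1) assms finite_subset unfolding determining_set_def by auto
  have "critical_set V E k c S" unfolding critical_set_def
  proof (intro conjI allI impI)
    fix T assume "T \<subset> S"
    then have "card T < card S" using psubset_card_mono fS by blast
    then show "\<not> determining_set V E k c T" using S(2) by force
  qed (rule S(1))
  then show ?thesis by blast
qed


lemma crit_card:
  assumes sg: "simple_graph V E" and ne: "V \<noteq> {}"
    and P: "proper_colouring V E (chromatic_number V E) c"
    and C: "critical_set V E (chromatic_number V E) c S"
  shows "card S \<le> card V - 1"
proof -
  let ?k = "chromatic_number V E"
  have fin: "finite V" using sg unfolding simple_graph_def by auto
  have SV: "S \<subseteq> V" using C unfolding critical_set_def determining_set_def by auto
  have "S \<noteq> V"
  proof
    assume SV': "S = V"
    have R: "recol V E ?k c x" if x: "x \<in> V" for x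
    proof -
      have "V - {x} \<subset> S" using SV' x by auto
      then have "\<not> determining_set V E ?k c (V - {x})" using C unfolding critical_set_def by blast
      then obtain c' where c': "proper_colouring V E ?k c'" "\<exists>w\<in>V. c' w \<noteq> c w"
        "\<forall>s\<in>V-{x}. c' s = c s"
        unfolding determining_set_def by auto
      then have "c' x \<noteq> c x" by auto
      moreover have "proper_colouring V E ?k (c(x := c' x))"
        by (rule proper_cong[OF c'(1)]) (use c'(3) in auto)
      ultimately show ?thesis unfolding recol_def by blast
    qed
    obtain x0 where x0: "x0 \<in> V" using ne by auto
    have "c x0 < ?k" using P x0 unfolding proper_colouring_def by auto
    then obtain c3 where "proper_colouring V E (?k - 1) c3"
      using class_elim[OF P, of "c x0"] R by blast
    then have "?k \<le> ?k - 1" by (rule chi_le)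
    then show False using \<open>c x0 < ?k\<close> by auto
  qed
  then have "S \<subset> V" using SV by auto
  then have "card S < card V" using psubset_card_mono fin by blast
  then show ?thesis by auto
qed

lemma lcs_facts:
  assumes sg: "simple_graph V E" and ne: "V \<noteq> {}"
    and P: "proper_colouring V E (chromatic_number V E) c"
  shows "lcs V E (chromatic_number V E) c \<le> card V - 1"
    and "critical_set V E (chromatic_number V E) c S \<Longrightarrow> card S \<le> lcs V E (chromatic_number V E) c"
    and "lcs V E (chromatic_number V E) c \<in> {card S | S. critical_set V E (chromatic_number V E) c S}"
proof -
  let ?k = "chromatic_number V E"
  let ?A = "{card S | S. critical_set V E ?k c S}"
  have fin: "finite V" using sg unfolding simple_graph_def by auto
  have "?A \<subseteq> {..card V}"
    using card_mono[OF fin] unfolding critical_set_def determining_set_def by auto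
  then have fA: "finite ?A" using finite_subset by blast
  have neA: "?A \<noteq> {}" using crit_ex[OF fin] by blast
  show "lcs V E ?k c \<le> card V - 1" unfolding lcs_def
    using Max_le_iff[OF fA neA] crit_card[OF sg ne P] by auto
  show "critical_set V E ?k c S \<Longrightarrow> card S \<le> lcs V E ?k c" unfolding lcs_def
    using Max_ge[OF fA] by blast
  show "lcs V E ?k c \<in> ?A" unfolding lcs_def using Max_in[OF fA neA] .
qed

lemma lcsbar_facts:
  assumes sg: "simple_graph V E" and ne: "V \<noteq> {}"
  shows "lcs_bar V E \<le> card V - 1"
    and "proper_colouring V E (chromatic_number V E) c \<Longrightarrow> lcs V E (chromatic_number V E) c \<le> lcs_bar V E"
    and "lcs_bar V E \<in> {lcs V E (chromatic_number V E) c | c. proper_colouring V E (chromatic_number V E) c}"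
proof -
  let ?k = "chromatic_number V E"
  let ?A = "{lcs V E ?k c | c. proper_colouring V E ?k c}"
  have fin: "finite V" using sg unfolding simple_graph_def by auto
  have irr: "\<not> E x x" for x using sg unfolding simple_graph_def by auto
  have "?A \<subseteq> {..card V - 1}"
    using lcs_facts(1)[OF sg ne] by auto
  then have fA: "finite ?A" using finite_subset by blast
  have neA: "?A \<noteq> {}" using chi_ex[of V E, OF fin irr] by blast
  show "lcs_bar V E \<le> card V - 1" unfolding lcs_bar_def lcs_bar_k_def
    using Max_le_iff[OF fA neA] lcs_facts(1)[OF sg ne] by auto
  show "proper_colouring V E ?k c \<Longrightarrow> lcs V E ?k c \<le> lcs_bar V E" unfolding lcs_bar_def lcs_bar_k_def
    using Max_ge[OF fA] by blast
  show "lcs_bar V E \<in> ?A" unfolding lcs_bar_def lcs_bar_k_def using Max_in[OF fA neA] .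
qed

lemma lcsbar_iff:
  assumes sg: "simple_graph V E" and ne: "V \<noteq> {}"
  shows "lcs_bar V E = card V - 1 \<longleftrightarrow>
    (\<exists>c S. proper_colouring V E (chromatic_number V E) c \<and> critical_set V E (chromatic_number V E) c S
       \<and> card S = card V - 1)"
proof
  assume h: "lcs_bar V E = card V - 1"
  obtain c where c: "proper_colouring V E (chromatic_number V E) c"
    "lcs_bar V E = lcs V E (chromatic_number V E) c"
    using lcsbar_facts(3)[OF sg ne] by blast
  obtain S where "critical_set V E (chromatic_number V E) c S" "lcs V E (chromatic_number V E) c = card S"
    using lcs_facts(3)[OF sg ne c(1)] by blast
  then show "\<exists>c S. proper_colouring V E (chromatic_number V E) c \<and> critical_set V E (chromatic_number V E) c S
       \<and> card S = card V - 1" using c h by auto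
next
  assume "\<exists>c S. proper_colouring V E (chromatic_number V E) c \<and> critical_set V E (chromatic_number V E) c S
       \<and> card S = card V - 1"
  then obtain c S where c: "proper_colouring V E (chromatic_number V E) c"
    "critical_set V E (chromatic_number V E) c S" "card S = card V - 1" by blast
  have "card V - 1 \<le> lcs_bar V E"
    using lcs_facts(2)[OF sg ne c(1) c(2)] lcsbar_facts(2)[OF sg ne c(1)] c(3) by auto
  then show "lcs_bar V E = card V - 1" using lcsbar_facts(1)[OF sg ne] by auto
qed


lemma fwd:
  assumes sg: "simple_graph V E" and ne: "V \<noteq> {}"
    and P: "proper_colouring V E (chromatic_number V E) c"
    and C: "critical_set V E (chromatic_number V E) c S" and cS: "card S = card V - 1"
  shows "\<exists>v\<in>V. chromatic_number (del_vertex_V V v) (del_vertex_E E v) = chromatic_number V E - 1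
          \<and> chromatic_number V E - 1 = degree V E v"
proof -
  define k where "k = chromatic_number V E"
  have fin: "finite V" using sg unfolding simple_graph_def by auto
  have irr: "\<not> E x x" for x using sg unfolding simple_graph_def by auto
  have sym: "E x y \<Longrightarrow> E y x" for x y using sg unfolding simple_graph_def by auto
  have Pk: "proper_colouring V E k c" using P k_def by simp
  have Ck: "critical_set V E k c S" using C k_def by simp
  have kpos: "0 < k" using Pk ne unfolding proper_colouring_def by auto
  have SV: "S \<subseteq> V" using C unfolding critical_set_def determining_set_def by auto
  have "card V > 0" using fin ne card_gt_0_iff by blast
  then have "card (V - S) = 1" using card_Diff_subset[OF finite_subset[OF SV fin] SV] cS by simp
  then obtain v where vS: "V - S = {v}" using card_1_singletonE by blast
  then have v: "v \<in> V" and Sdef: "S = V - {v}" using SV by auto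
  define a where "a = c v"
  have ak: "a < k" using Pk v unfolding a_def proper_colouring_def by auto
  have detS: "determining_set V E k c (V - {v})" using Ck Sdef unfolding critical_set_def by simp
  have F1: "\<exists>u\<in>V. E v u \<and> c u = b" if b: "b < k" "b \<noteq> a" for b
  proof (rule ccontr)
    assume nb: "\<not> (\<exists>u\<in>V. E v u \<and> c u = b)"
    have "proper_colouring V E k (c(v:=b))"
      unfolding proper_colouring_def
    proof (intro conjI ballI impI)
      fix x assume "x \<in> V" then show "(c(v:=b)) x < k" using Pk b unfolding proper_colouring_def by auto
    next
      fix x y assume xy: "x \<in> V" "y \<in> V" "E x y"
      show "(c(v:=b)) x \<noteq> (c(v:=b)) y"
      proof (cases "x = v")
        case True
        then have "y \<noteq> v" using xy irr by auto
        moreover have "c y \<noteq> b" using nb xy True by auto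
        ultimately show ?thesis using True by simp
      next
        case False
        show ?thesis
        proof (cases "y = v")
          case True
          then have "E v x" using sym xy by auto
          then have "c x \<noteq> b" using nb xy by auto
          then show ?thesis using True False by simp
        next
          case False2: False
          have "c x \<noteq> c y" using Pk xy unfolding proper_colouring_def by auto
          then show ?thesis using False False2 by simp
        qed
      qed
    qed
    moreover have "(c(v:=b)) v \<noteq> c v" using b a_def by simp
    moreover have "\<forall>s\<in>V-{v}. (c(v:=b)) s = c s" by auto
    ultimately show False using detS v unfolding determining_set_def by blast
  qed
  have F2: "recol V E k c u \<or> (E v u \<and> (\<forall>w\<in>V. E v w \<and> c w = c u \<longrightarrow> w = u))"
    if u: "u \<in> V" "u \<noteq> v" for u
  proof -
    have "V - {v} - {u} \<subset> S" using u Sdef by auto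
    then have "\<not> determining_set V E k c (V - {v} - {u})" using Ck unfolding critical_set_def by blast
    then obtain c' where c': "proper_colouring V E k c'" "\<exists>w\<in>V. c' w \<noteq> c w"
        "\<forall>s\<in>V - {v} - {u}. c' s = c s"
      unfolding determining_set_def by auto
    show ?thesis
    proof (cases "c' v = c v")
      case True
      then have "c' u \<noteq> c u" using c' by auto
      moreover have "proper_colouring V E k (c(u := c' u))"
        by (rule proper_cong[OF c'(1)]) (use c'(3) True in \<open>metis Diff_iff empty_iff fun_upd_other fun_upd_same insert_iff\<close>)
      ultimately show ?thesis unfolding recol_def by blast
    next
      case False
      define b where "b = c' v"
      have bk: "b < k" using c'(1) v unfolding b_def proper_colouring_def by auto
      have ba: "b \<noteq> a" using False unfolding a_def b_def by simp
      have key: "w = u" if w: "w \<in> V" "E v w" "c w = b" for w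
      proof (rule ccontr)
        assume "w \<noteq> u"
        moreover have "w \<noteq> v" using w irr by auto
        ultimately have "c' w = c' v" using c'(3) w b_def by auto
        then show False using c'(1) w(1,2) v unfolding proper_colouring_def by metis
      qed
      obtain w where w: "w \<in> V" "E v w" "c w = b" using F1[OF bk ba] by blast
      then have "w = u" using key by blast
      then show ?thesis using key w by auto
    qed
  qed
  define N where "N = {u \<in> V. E v u}"
  have inj: "inj_on c N"
  proof (rule inj_onI)
    fix u1 u2 assume u: "u1 \<in> N" "u2 \<in> N" "c u1 = c u2"
    define b where "b = c u1"
    have bk: "b < k" using Pk u unfolding b_def N_def proper_colouring_def by auto
    have ba: "b \<noteq> a" using Pk u v unfolding a_def b_def N_def proper_colouring_def by (metis (mono_tags, lifting) mem_Collect_eq)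
    have "\<exists>x\<in>V. c x = b \<and> \<not> recol V E k c x"
    proof (rule ccontr)
      assume "\<not> (\<exists>x\<in>V. c x = b \<and> \<not> recol V E k c x)"
      then obtain c3 where "proper_colouring V E (k - 1) c3" using class_elim[OF Pk bk] by blast
      then have "k \<le> k - 1" using chi_le k_def by blast
      then show False using kpos by auto
    qed
    then obtain x where x: "x \<in> V" "c x = b" "\<not> recol V E k c x" by blast
    have "x \<noteq> v" using x ba a_def by auto
    then have "\<forall>w\<in>V. E v w \<and> c w = c x \<longrightarrow> w = x" using F2[OF x(1)] x(3) by auto
    then show "u1 = u2" using u x(2) unfolding b_def N_def by auto
  qed
  have img: "c ` N = {0..<k} - {a}"
  proof
    show "c ` N \<subseteq> {0..<k} - {a}"
    proof
      fix b assume "b \<in> c ` N"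
      then obtain u where u: "u \<in> V" "E v u" "b = c u" unfolding N_def by blast
      have "c v \<noteq> c u" using Pk u(1,2) v unfolding proper_colouring_def by blast
      moreover have "c u < k" using Pk u(1) unfolding proper_colouring_def by blast
      ultimately show "b \<in> {0..<k} - {a}" using u(3) unfolding a_def by auto
    qed
    show "{0..<k} - {a} \<subseteq> c ` N"
    proof
      fix b assume "b \<in> {0..<k} - {a}"
      then obtain u where "u \<in> V" "E v u" "c u = b" using F1 by auto
      then show "b \<in> c ` N" unfolding N_def by blast
    qed
  qed
  have "card N = card (c ` N)" using card_image[OF inj] by simp
  also have "\<dots> = k - 1" using img ak by simp
  finally have deg: "degree V E v = k - 1" unfolding degree_def N_def .
  define V' where "V' = del_vertex_V V v"
  define E' where "E' = del_vertex_E E v"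
  have finV': "finite V'" using fin unfolding V'_def del_vertex_V_def by auto
  have irr': "\<not> E' x x" for x using irr unfolding E'_def del_vertex_E_def by auto
  have le: "chromatic_number V' E' \<le> k - 1"
  proof -
    have "recol V' E' k c x" if x: "x \<in> V'" "c x = a" for x
    proof -
      have xv: "x \<in> V" "x \<noteq> v" using x unfolding V'_def del_vertex_V_def by auto
      have "\<not> E v x" using Pk x(2) xv(1) v unfolding a_def proper_colouring_def by metis
      then have "recol V E k c x" using F2[OF xv] by auto
      then obtain d where "d \<noteq> c x" "proper_colouring V E k (c(x:=d))" unfolding recol_def by blast
      then show ?thesis unfolding recol_def V'_def E'_def using proper_restrict by metis
    qed
    then obtain c3 where "proper_colouring V' E' (k - 1) c3"
      using class_elim[OF proper_restrict[OF Pk, of v, folded V'_def E'_def] ak] by blast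
    then show ?thesis by (rule chi_le)
  qed
  have ge: "k - 1 \<le> chromatic_number V' E'"
  proof -
    define m where "m = chromatic_number V' E'"
    obtain c'' where c'': "proper_colouring V' E' m c''" using chi_ex[of V' E', OF finV' irr'] m_def by blast
    have "proper_colouring V E (m + 1) (c''(v := m))"
      unfolding proper_colouring_def
    proof (intro conjI ballI impI)
      fix x assume x: "x \<in> V"
      show "(c''(v:=m)) x < m + 1"
      proof (cases "x = v")
        case False
        then have "x \<in> V'" using x unfolding V'_def del_vertex_V_def by auto
        then have "c'' x < m" using c'' unfolding proper_colouring_def by blast
        then show ?thesis using False by simp
      qed simp
    next
      fix x y assume xy: "x \<in> V" "y \<in> V" "E x y"
      have lt: "c'' z < m" if "z \<in> V" "z \<noteq> v" for z
        using c'' that unfolding proper_colouring_def V'_def del_vertex_V_def by auto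
      have xy_ne: "x \<noteq> y" using xy irr by auto
      show "(c''(v:=m)) x \<noteq> (c''(v:=m)) y"
      proof (cases "x = v")
        case True
        then show ?thesis using lt[of y] xy xy_ne by auto
      next
        case False
        show ?thesis
        proof (cases "y = v")
          case True
          then show ?thesis using lt[of x] xy False by auto
        next
          case False2: False
          have "E' x y" using xy False False2 unfolding E'_def del_vertex_E_def by auto
          then have "c'' x \<noteq> c'' y" using c'' xy False False2
            unfolding proper_colouring_def V'_def del_vertex_V_def by auto
          then show ?thesis using False False2 by simp
        qed
      qed
    qed
    then have "k \<le> m + 1" using chi_le k_def by blast
    then show ?thesis unfolding m_def by simp
  qed
  show ?thesis using le ge deg v unfolding V'_def E'_def k_def by auto
qed


lemma bwd:
  assumes sg: "simple_graph V E" and v: "v \<in> V"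
    and h1: "chromatic_number (del_vertex_V V v) (del_vertex_E E v) = chromatic_number V E - 1"
    and h2: "chromatic_number V E - 1 = degree V E v"
  shows "\<exists>c S. proper_colouring V E (chromatic_number V E) c \<and> critical_set V E (chromatic_number V E) c S
       \<and> card S = card V - 1"
proof -
  define k where "k = chromatic_number V E"
  have fin: "finite V" using sg unfolding simple_graph_def by auto
  have irr: "\<not> E x x" for x using sg unfolding simple_graph_def by auto
  have sym: "E x y \<Longrightarrow> E y x" for x y using sg unfolding simple_graph_def by auto
  obtain c0 where "proper_colouring V E k c0" using chi_ex[of V E, OF fin irr] k_def by blast
  then have kpos: "0 < k" using v unfolding proper_colouring_def by auto
  define V' where "V' = del_vertex_V V v"
  define E' where "E' = del_vertex_E E v"
  have finV': "finite V'" using fin unfolding V'_def del_vertex_V_def by auto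
  have irr': "\<not> E' x x" for x using irr unfolding E'_def del_vertex_E_def by auto
  obtain d where d: "proper_colouring V' E' (k - 1) d"
    using chi_ex[of V' E', OF finV' irr'] h1 unfolding V'_def E'_def k_def by auto
  have dlt: "d x < k - 1" if "x \<in> V" "x \<noteq> v" for x
  proof -
    have "x \<in> V'" using that unfolding V'_def del_vertex_V_def by auto
    then show ?thesis using d unfolding proper_colouring_def by blast
  qed
  have dne: "d x \<noteq> d y" if "x \<in> V" "y \<in> V" "x \<noteq> v" "y \<noteq> v" "E x y" for x y
  proof -
    have "x \<in> V'" "y \<in> V'" "E' x y" using that unfolding V'_def del_vertex_V_def E'_def del_vertex_E_def by auto
    then show ?thesis using d unfolding proper_colouring_def by blast
  qed
  define N where "N = {u \<in> V. E v u}"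
  have finN: "finite N" using fin unfolding N_def by auto
  have Nv: "u \<in> V \<and> u \<noteq> v \<and> E v u" if "u \<in> N" for u using that irr unfolding N_def by auto
  have cardN: "card N = k - 1" using h2 unfolding k_def degree_def N_def by simp
  have surj: "\<exists>u\<in>N. d u = b" if b: "b < k - 1" for b
  proof (rule ccontr)
    assume nb: "\<not> (\<exists>u\<in>N. d u = b)"
    have "proper_colouring V E (k - 1) (d(v:=b))"
      unfolding proper_colouring_def
    proof (intro conjI ballI impI)
      fix x assume "x \<in> V" then show "(d(v:=b)) x < k - 1" using dlt b by (cases "x = v") auto
    next
      fix x y assume xy: "x \<in> V" "y \<in> V" "E x y"
      show "(d(v:=b)) x \<noteq> (d(v:=b)) y"
      proof (cases "x = v")
        case True
        then have "y \<noteq> v" using xy irr by auto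
        moreover have "d y \<noteq> b" using nb xy True unfolding N_def by auto
        ultimately show ?thesis using True by simp
      next
        case False
        show ?thesis
        proof (cases "y = v")
          case True
          then have "E v x" using sym xy by auto
          then have "d x \<noteq> b" using nb xy unfolding N_def by auto
          then show ?thesis using True False by simp
        next
          case False2: False
          show ?thesis using dne[OF xy(1,2) False False2 xy(3)] False False2 by simp
        qed
      qed
    qed
    then have "k \<le> k - 1" using chi_le k_def by blast
    then show False using kpos by auto
  qed
  have dN: "d ` N = {0..<k-1}"
  proof
    show "d ` N \<subseteq> {0..<k-1}" using dlt Nv by auto
    show "{0..<k-1} \<subseteq> d ` N" using surj by force
  qed
  have "card (d ` N) = card N" using dN cardN by simp
  then have inj: "inj_on d N" using inj_on_iff_eq_card finN by blast
  define c where "c = d(v := k - 1)"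
  have Pc: "proper_colouring V E k c"
    unfolding proper_colouring_def
  proof (intro conjI ballI impI)
    fix x assume "x \<in> V" then show "c x < k" using dlt[of x] kpos unfolding c_def by (cases "x = v") auto
  next
    fix x y assume xy: "x \<in> V" "y \<in> V" "E x y"
    show "c x \<noteq> c y"
    proof (cases "x = v")
      case True
      then have "y \<noteq> v" using xy irr by auto
      then show ?thesis using True dlt[OF xy(2)] unfolding c_def by simp
    next
      case False
      show ?thesis
      proof (cases "y = v")
        case True
        then show ?thesis using False dlt[OF xy(1)] unfolding c_def by simp
      next
        case False2: False
        show ?thesis using dne[OF xy(1,2) False False2 xy(3)] False False2 unfolding c_def by simp
      qed
    qed
  qed
  define S where "S = V - {v}"
  have detS: "determining_set V E k c S"
    unfolding determining_set_def
  proof (intro conjI notI)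
    show "S \<subseteq> V" unfolding S_def by auto
  next
    assume "\<exists>c'. proper_colouring V E k c' \<and> (\<exists>v\<in>V. c' v \<noteq> c v) \<and> (\<forall>s\<in>S. c' s = c s)"
    then obtain c' w where c': "proper_colouring V E k c'" "w \<in> V" "c' w \<noteq> c w" "\<forall>s\<in>S. c' s = c s"
      by blast
    have "w = v" using c' unfolding S_def by auto
    then have "c' v \<noteq> k - 1" using c'(3) unfolding c_def by simp
    moreover have "c' v < k" using c'(1) v unfolding proper_colouring_def by blast
    ultimately have "c' v < k - 1" by auto
    then obtain u where u: "u \<in> N" "d u = c' v" using surj by blast
    have "c' u = c u" using c'(4) Nv[OF u(1)] unfolding S_def by auto
    then have "c' u = c' v" using u Nv[OF u(1)] unfolding c_def by simp
    moreover have "c' v \<noteq> c' u" using c'(1) v Nv[OF u(1)] unfolding proper_colouring_def by blast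
    ultimately show False by simp
  qed
  have nondet: "\<not> determining_set V E k c (V - {v} - {u})" if u: "u \<in> V" "u \<noteq> v" for u
  proof -
    have "\<exists>c'. proper_colouring V E k c' \<and> c' u \<noteq> c u \<and> (\<forall>s\<in>V - {v} - {u}. c' s = c s)"
    proof (cases "E v u")
      case True
      then have uN: "u \<in> N" using u unfolding N_def by auto
      define c' where "c' = c(u := k - 1, v := d u)"
      have "proper_colouring V E k c'"
        unfolding proper_colouring_def
      proof (intro conjI ballI impI)
        fix x assume x: "x \<in> V" then show "c' x < k" using dlt[of x] dlt[OF u] kpos u unfolding c'_def c_def
          by (cases "x = v"; cases "x = u") auto
      next
        fix x y assume xy: "x \<in> V" "y \<in> V" "E x y"
        have xy_ne: "x \<noteq> y" using xy irr by auto
        have gen: "c' x \<noteq> c' y" if "x \<in> V" "y \<in> V" "E x y" "x \<noteq> y" "x \<noteq> v" "x \<noteq> u" for x y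
        proof -
          have cx: "c' x = d x" using that unfolding c'_def c_def by simp
          consider "y = v" | "y = u" | "y \<noteq> v" "y \<noteq> u" by blast
          then show ?thesis
          proof cases
            case 1
            then have "x \<in> N" using that sym unfolding N_def by auto
            then have "d x \<noteq> d u" using inj uN that(6) unfolding inj_on_def by blast
            then show ?thesis using cx 1 unfolding c'_def by simp
          next
            case 2
            then show ?thesis using cx dlt[OF that(1,5)] u unfolding c'_def by simp
          next
            case 3
            then show ?thesis using cx dne[OF that(1,2,5) 3(1) that(3)] unfolding c'_def c_def by simp
          qed
        qed
        have vu: "c' v \<noteq> c' u" using dlt[OF u] u unfolding c'_def by simp
        show "c' x \<noteq> c' y"
        proof (cases "x \<in> {u, v}")
          case False
          then show ?thesis using gen[OF xy xy_ne] by auto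
        next
          case True
          show ?thesis
          proof (cases "y \<in> {u, v}")
            case False
            then have "c' y \<noteq> c' x" using gen[OF xy(2,1) sym[OF xy(3)]] xy_ne by auto
            then show ?thesis by simp
          next
            case True2: True
            then show ?thesis using True xy_ne vu by auto
          qed
        qed
      qed
      moreover have "c' u \<noteq> c u" using u dlt[OF u] unfolding c'_def c_def by simp
      moreover have "\<forall>s\<in>V - {v} - {u}. c' s = c s" unfolding c'_def by auto
      ultimately show ?thesis by blast
    next
      case False
      define c' where "c' = c(u := k - 1)"
      have "proper_colouring V E k c'"
        unfolding proper_colouring_def
      proof (intro conjI ballI impI)
        fix x assume "x \<in> V" then show "c' x < k" using Pc kpos unfolding c'_def proper_colouring_def
          by (cases "x = u") auto
      next
        fix x y assume xy: "x \<in> V" "y \<in> V" "E x y"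
        have xy_ne: "x \<noteq> y" using xy irr by auto
        have gen: "c' x \<noteq> c' y" if "x \<in> V" "y \<in> V" "E x y" "x \<noteq> y" "x = u" for x y
        proof -
          have "y \<noteq> v" using False that sym by auto
          then show ?thesis using that dlt[OF that(2)] unfolding c'_def c_def by simp
        qed
        show "c' x \<noteq> c' y"
        proof (cases "x = u")
          case True then show ?thesis using gen[OF xy xy_ne] by simp
        next
          case F1: False
          show ?thesis
          proof (cases "y = u")
            case True then show ?thesis using gen[OF xy(2,1) sym[OF xy(3)]] xy_ne by auto
          next
            case False
            then show ?thesis using F1 Pc xy unfolding c'_def proper_colouring_def by simp
          qed
        qed
      qed
      moreover have "c' u \<noteq> c u" using u dlt[OF u] unfolding c'_def c_def by simp
      moreover have "\<forall>s\<in>V - {v} - {u}. c' s = c s" unfolding c'_def by auto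
      ultimately show ?thesis by blast
    qed
    then show ?thesis using u unfolding determining_set_def by blast
  qed
  have critS: "critical_set V E k c S"
    unfolding critical_set_def
  proof (intro conjI allI impI)
    show "determining_set V E k c S" by (rule detS)
  next
    fix T assume T: "T \<subset> S"
    then obtain u where u: "u \<in> S" "u \<notin> T" by blast
    show "\<not> determining_set V E k c T"
    proof
      assume "determining_set V E k c T"
      then have "determining_set V E k c (V - {v} - {u})"
        by (rule det_mono) (use T u S_def in auto)
      then show False using nondet u unfolding S_def by auto
    qed
  qed
  have "card S = card V - 1" unfolding S_def using v fin by simp
  then show ?thesis using Pc critS unfolding k_def by blast
qed

theorem theorem3:
  fixes V :: "'a set" and E :: "'a \<Rightarrow> 'a \<Rightarrow> bool" and n :: nat
  assumes "simple_graph V E" and "connected_graph V E" and "card V = n"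
  shows "lcs_bar V E = n - 1 \<longleftrightarrow>
    (\<exists>v\<in>V. chromatic_number (del_vertex_V V v) (del_vertex_E E v) = chromatic_number V E - 1
          \<and> chromatic_number V E - 1 = degree V E v)"
proof -
  have ne: "V \<noteq> {}" using assms(2) unfolding connected_graph_def by auto
  show ?thesis
    unfolding assms(3)[symmetric] lcsbar_iff[OF assms(1) ne]
    using fwd[OF assms(1) ne] bwd[OF assms(1)] by blast
qed

end
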